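(* Let $A$ be a $d\times n$ matrix with integer entries and $\ker(A)\cap\mathbb R^{n}_{\ge0}=\{\mathbf 0\}$. Let $\mathbf c$ be a column of $A$, let $\mathbf c'\in\mathbb Z^{d}$, and let $A'$ be the matrix obtained from $A$ by replacing the column $\mathbf c$ with $\mathbf c'$. If $p_{A'}(\mathbf c)\ge p_A(\mathbf c)$, then $p_{A'}(\mathbf b)\ge p_A(\mathbf b)$ for all $\mathbf b\in\mathbb Z^d_{\ge0}$.
   Context: For an integer matrix $M$ with $r$ columns and $\mathbf b$ a vector, $p_M(\mathbf b)=\#\{\mathbf x\in\mathbb Z^r_{\ge0}:M\mathbf x=\mathbf b\}$ (the vector partition function; counted as a cardinality). *)

theory Defs
  imports "HOL-Analysis.Analysis" "HOL-Library.Extended_Nat"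
begin

definition vpf :: "int^'n^'d \<Rightarrow> int^'d \<Rightarrow> enat" where
  "vpf M b = (let S = {x :: nat^'n. M *v (\<chi> i. int (x $ i)) = b}
              in if finite S then enat (card S) else \<infinity>)"

definition replace_col :: "int^'n^'d \<Rightarrow> 'n \<Rightarrow> int^'d \<Rightarrow> int^'n^'d" where
  "replace_col M j c' = (\<chi> i k. if k = j then c' $ i else M $ i $ k)"

end

theory Submission
  imports Defs
begin

lemma nat_seq_mono_sub:
  fixes s :: "nat \<Rightarrow> nat"
  shows "\<exists>r. strict_mono r \<and> incseq (\<lambda>n. s (r n))"
proof -
  obtain g where g: "strict_mono g" "monoseq (\<lambda>n. s (g n))" using seq_monosub by blast
  show ?thesis
  proof (cases "incseq (\<lambda>n. s (g n))")
    case True then show ?thesis using g by blast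
  next
    case False
    then have dec: "decseq (\<lambda>n. s (g n))" using g(2) unfolding monoseq_iff by blast
    obtain m where m: "\<forall>n. s (g m) \<le> s (g n)"
      using ex_has_least_nat[of "\<lambda>_. True" 0 "\<lambda>n. s (g n)"] by blast
    have c: "s (g (n + m)) = s (g m)" for n
      using dec m unfolding decseq_def by (metis le_add2 order_antisym)
    have "strict_mono (g \<circ> (\<lambda>n. n + m))"
      using g(1) by (simp add: strict_mono_def)
    moreover have "incseq (\<lambda>n. s ((g \<circ> (\<lambda>n. n + m)) n))"
      by (simp add: c incseq_def)
    ultimately show ?thesis by blast
  qed
qed

lemma dickson_seq:
  "finite I \<Longrightarrow> \<forall>f :: nat \<Rightarrow> 'i \<Rightarrow> nat. \<exists>r. strict_mono r \<and> (\<forall>k\<in>I. incseq (\<lambda>n. f (r n) k))"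
proof (induction I rule: finite_induct)
  case empty
  then show ?case by (metis strict_mono_id empty_iff)
next
  case (insert a I)
  show ?case
  proof
    fix f :: "nat \<Rightarrow> 'i \<Rightarrow> nat"
    obtain r where r: "strict_mono r" "\<forall>k\<in>I. incseq (\<lambda>n. f (r n) k)" using insert.IH by blast
    obtain r2 where r2: "strict_mono r2" "incseq (\<lambda>n. f (r (r2 n)) a)"
      using nat_seq_mono_sub[of "\<lambda>n. f (r n) a"] by blast
    have "strict_mono (r \<circ> r2)" using r(1) r2(1) by (simp add: strict_mono_def)
    moreover have "\<forall>k\<in>insert a I. incseq (\<lambda>n. f ((r \<circ> r2) n) k)"
    proof
      fix k assume "k \<in> insert a I"
      then show "incseq (\<lambda>n. f ((r \<circ> r2) n) k)"
      proof
        assume "k = a" then show ?thesis using r2(2) by simp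
      next
        assume "k \<in> I"
        then have "incseq (\<lambda>n. f (r n) k)" using r(2) by blast
        then show ?thesis using r2(1) unfolding incseq_def
          by (simp add: strict_mono_less_eq)
      qed
    qed
    ultimately show "\<exists>r. strict_mono r \<and> (\<forall>k\<in>insert a I. incseq (\<lambda>n. f (r n) k))" by blast
  qed
qed

lemma fin_sol:
  fixes A :: "int^'n^'d"
  assumes ker: "\<forall>x :: real^'n. (\<forall>k. x $ k \<ge> 0) \<and> (map_matrix real_of_int A) *v x = 0 \<longrightarrow> x = 0"
  shows "finite {x :: nat^'n. A *v (\<chi> i. int (x $ i)) = b}"
proof (rule ccontr)
  let ?S = "{x :: nat^'n. A *v (\<chi> i. int (x $ i)) = b}"
  assume "infinite ?S"
  then obtain f :: "nat \<Rightarrow> nat^'n" where f: "inj f" "range f \<subseteq> ?S"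
    using infinite_countable_subset by blast
  have "\<forall>g :: nat \<Rightarrow> 'n \<Rightarrow> nat. \<exists>r. strict_mono r \<and> (\<forall>k\<in>(UNIV::'n set). incseq (\<lambda>n. g (r n) k))"
    by (rule dickson_seq) simp
  then have "\<exists>r. strict_mono r \<and> (\<forall>k\<in>(UNIV::'n set). incseq (\<lambda>n. (\<lambda>n k. f n $ k) (r n) k))"
    by (rule spec)
  then obtain r where r: "strict_mono r" "\<forall>k\<in>(UNIV::'n set). incseq (\<lambda>n. f (r n) $ k)"
    by auto
  define x where "x = f (r 0)"
  define y where "y = f (r 1)"
  have "r 0 < r 1" using r(1) by (simp add: strict_mono_def)
  then have "r 0 \<noteq> r 1" by simp
  then have xy: "x \<noteq> y" using f(1) unfolding x_def y_def inj_def by blast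
  have le: "x $ k \<le> y $ k" for k
  proof -
    have "incseq (\<lambda>n. f (r n) $ k)" using r(2) by simp
    then show ?thesis unfolding x_def y_def incseq_def by simp
  qed
  have Ax: "A *v (\<chi> i. int (x $ i)) = b" and Ay: "A *v (\<chi> i. int (y $ i)) = b"
    using f(2) unfolding x_def y_def by blast+
  define z :: "real^'n" where "z = (\<chi> k. real (y $ k) - real (x $ k))"
  have z0: "\<forall>k. z $ k \<ge> 0" using le by (simp add: z_def)
  have "(map_matrix real_of_int A) *v z = 0"
  proof -
    have "((map_matrix real_of_int A) *v z) $ i = 0" for i
    proof -
      have "((map_matrix real_of_int A) *v z) $ i
          = (\<Sum>k\<in>UNIV. real_of_int (A $ i $ k * (int (y $ k) - int (x $ k))))"
        by (simp add: matrix_vector_mult_def z_def)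
      also have "\<dots> = real_of_int (\<Sum>k\<in>UNIV. A $ i $ k * int (y $ k) - A $ i $ k * int (x $ k))"
        by (simp only: of_int_sum right_diff_distrib)
      also have "\<dots> = real_of_int ((A *v (\<chi> i. int (y $ i))) $ i - (A *v (\<chi> i. int (x $ i))) $ i)"
        by (simp only: matrix_vector_mult_def vec_lambda_beta sum_subtractf)
      also have "\<dots> = 0" using Ax Ay by simp
      finally show ?thesis .
    qed
    then show ?thesis by (simp add: vec_eq_iff)
  qed
  then have "z = 0" using ker[rule_format, of z] z0 by simp
  then have "x = y" by (simp add: z_def vec_eq_iff)
  then show False using xy by blast
qed

lemma row_split:
  fixes M :: "int^'n^'d" and x :: "nat^'n"
  shows "(M *v (\<chi> i. int (x $ i))) $ r = M $ r $ j * int (x $ j) + (\<Sum>k\<in>UNIV - {j}. M $ r $ k * int (x $ k))"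
  by (simp add: matrix_vector_mult_def sum.remove[of UNIV j])

lemma rc_j[simp]: "replace_col M j c' $ r $ j = c' $ r"
  by (simp add: replace_col_def)

lemma rc_k[simp]: "k \<noteq> j \<Longrightarrow> replace_col M j c' $ r $ k = M $ r $ k"
  by (simp add: replace_col_def)

theorem mainTheorem16:
  fixes A :: "int^'n^'d" and j :: 'n and c' :: "int^'d"
  assumes ker: "\<forall>x :: real^'n. (\<forall>k. x $ k \<ge> 0) \<and> (map_matrix real_of_int A) *v x = 0 \<longrightarrow> x = 0"
    and le: "vpf (replace_col A j c') (column j A) \<ge> vpf A (column j A)"
  shows "\<forall>b :: int^'d. (\<forall>i. b $ i \<ge> 0) \<longrightarrow> vpf (replace_col A j c') b \<ge> vpf A b"
proof -
  define A' where "A' = replace_col A j c'"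
  define c where "c = column j A"
  define Sol where "Sol = (\<lambda>(M::int^'n^'d) b. {x :: nat^'n. M *v (\<chi> i. int (x $ i)) = b})"
  have vpfS: "vpf M b = (if finite (Sol M b) then enat (card (Sol M b)) else \<infinity>)" for M b
    by (simp add: vpf_def Sol_def Let_def)
  have finA: "finite (Sol A b)" for b unfolding Sol_def using fin_sol[OF ker] .
  have "\<exists>x0 \<in> Sol A' c. x0 $ j \<ge> 1"
  proof (rule ccontr)
    assume "\<not> ?thesis"
    then have z: "\<forall>x \<in> Sol A' c. x $ j = 0" by force
    define e :: "nat^'n" where "e = (\<chi> i. if i = j then 1 else 0)"
    have eS: "e \<in> Sol A c"
    proof -
      have "(A *v (\<chi> i. int (e $ i))) $ r = c $ r" for r
        using row_split[of A e r j] by (simp add: e_def c_def column_def)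
      then show ?thesis by (simp add: Sol_def vec_eq_iff)
    qed
    have sub: "Sol A' c \<subseteq> Sol A c - {e}"
    proof
      fix x assume x: "x \<in> Sol A' c"
      have xj: "x $ j = 0" using z x by blast
      have "(A *v (\<chi> i. int (x $ i))) $ r = (A' *v (\<chi> i. int (x $ i))) $ r" for r
        using row_split[of A x r j] row_split[of A' x r j] xj by (simp add: A'_def)
      then have "x \<in> Sol A c" using x by (simp add: Sol_def vec_eq_iff)
      moreover have "x \<noteq> e" using xj by (auto simp: e_def vec_eq_iff)
      ultimately show "x \<in> Sol A c - {e}" by blast
    qed
    then have "Sol A' c \<subset> Sol A c" using eS by blast
    then have fin': "finite (Sol A' c)" and lt: "card (Sol A' c) < card (Sol A c)"
      using finA[of c] by (auto intro: psubset_card_mono rev_finite_subset)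
    have "vpf A' c \<ge> vpf A c" using le by (simp add: A'_def c_def)
    then show False using lt fin' finA[of c] by (simp add: vpfS)
  qed
  then obtain x0 where x0: "x0 \<in> Sol A' c" and x0j: "x0 $ j \<ge> 1" by blast
  have hx0: "c' $ r * int (x0 $ j) + (\<Sum>k\<in>UNIV - {j}. A $ r $ k * int (x0 $ k)) = A $ r $ j" for r
  proof -
    have "(A' *v (\<chi> i. int (x0 $ i))) $ r = c $ r" using x0 by (simp add: Sol_def)
    moreover have "(\<Sum>k\<in>UNIV - {j}. A' $ r $ k * int (x0 $ k)) = (\<Sum>k\<in>UNIV - {j}. A $ r $ k * int (x0 $ k))"
      by (rule sum.cong) (auto simp: A'_def)
    ultimately show ?thesis using row_split[of A' x0 r j] by (simp add: A'_def c_def column_def)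
  qed
  show ?thesis
  proof (intro allI impI)
    fix b :: "int^'d"
    show "vpf (replace_col A j c') b \<ge> vpf A b"
    proof (cases "finite (Sol A' b)")
      case False
      then show ?thesis by (simp add: vpfS A'_def)
    next
      case True
      define \<phi> :: "nat^'n \<Rightarrow> nat^'n" where
        "\<phi> = (\<lambda>x. \<chi> i. if i = j then x $ j * x0 $ j else x $ i + x $ j * x0 $ i)"
      have inj: "inj_on \<phi> (Sol A b)"
      proof (rule inj_onI)
        fix x y assume "\<phi> x = \<phi> y"
        then have e: "\<And>i. \<phi> x $ i = \<phi> y $ i" by simp
        have "x $ j * x0 $ j = y $ j * x0 $ j" using e[of j] by (simp add: \<phi>_def)
        then have xj: "x $ j = y $ j" using x0j by simp
        have "x $ i = y $ i" for i
        proof (cases "i = j")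
          case True then show ?thesis using xj by simp
        next
          case False then show ?thesis using e[of i] xj by (simp add: \<phi>_def)
        qed
        then show "x = y" by (simp add: vec_eq_iff)
      qed
      have maps: "\<phi> ` Sol A b \<subseteq> Sol A' b"
      proof
        fix y assume "y \<in> \<phi> ` Sol A b"
        then obtain x where x: "x \<in> Sol A b" and y: "y = \<phi> x" by blast
        have hx: "A $ r $ j * int (x $ j) + (\<Sum>k\<in>UNIV - {j}. A $ r $ k * int (x $ k)) = b $ r" for r
          using x row_split[of A x r j] by (simp add: Sol_def)
        have "(A' *v (\<chi> i. int (y $ i))) $ r = b $ r" for r
        proof -
          have s: "(\<Sum>k\<in>UNIV - {j}. A' $ r $ k * int (y $ k))
              = (\<Sum>k\<in>UNIV - {j}. A $ r $ k * int (x $ k)) + int (x $ j) * (\<Sum>k\<in>UNIV - {j}. A $ r $ k * int (x0 $ k))"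
          proof -
            have "(\<Sum>k\<in>UNIV - {j}. A' $ r $ k * int (y $ k))
              = (\<Sum>k\<in>UNIV - {j}. A $ r $ k * int (x $ k) + int (x $ j) * (A $ r $ k * int (x0 $ k)))"
              by (rule sum.cong) (auto simp: y \<phi>_def A'_def algebra_simps)
            then show ?thesis by (simp add: sum.distrib sum_distrib_left)
          qed
          have "(A' *v (\<chi> i. int (y $ i))) $ r
             = c' $ r * (int (x $ j) * int (x0 $ j)) + (\<Sum>k\<in>UNIV - {j}. A' $ r $ k * int (y $ k))"
            using row_split[of A' y r j] by (simp add: A'_def y \<phi>_def)
          also have "\<dots> = int (x $ j) * (c' $ r * int (x0 $ j) + (\<Sum>k\<in>UNIV - {j}. A $ r $ k * int (x0 $ k)))
                          + (\<Sum>k\<in>UNIV - {j}. A $ r $ k * int (x $ k))"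
            unfolding s by (simp add: algebra_simps)
          also have "\<dots> = b $ r" using hx0[of r] hx[of r] by (simp add: algebra_simps)
          finally show ?thesis .
        qed
        then show "y \<in> Sol A' b" by (simp add: Sol_def vec_eq_iff)
      qed
      have "card (Sol A b) \<le> card (Sol A' b)"
        using card_inj_on_le[OF inj maps True] .
      then show ?thesis using True finA[of b] by (simp add: vpfS A'_def)
    qed
  qed
qed

end
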